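(* Let $\mathcal{T}_{5,2}$ be the set of $s\in\mathcal{A}^*$ with $|s|\ne\mathsf{rmin}(s)+1$, $\mathrm{sebr}(s)\ne0$, $\mathrm{sebr}(s)\ge\mathrm{Rmin}(s)_{\mathsf{rpos}(s)+1}$ and $\mathrm{Prm}(s)_{\mathsf{rpos}(s)+1}\ne\mathrm{Prm}(s)_{\mathsf{rpos}(s)}+1$. For every $n$ there is a bijection $f_{5,2}$ from $\mathcal{T}_{5,2}\cap\mathcal{A}_n$ onto the set of $s\in\mathcal{A}_n$ such that $\mathsf{rpos}(s)\ne0$, the rightmost occurrence of $\mathrm{Rmin}(s)_{\mathsf{rpos}(s)-1}$ is not adjacent to the second rightmost occurrence of $\mathrm{Rmin}(s)_{\mathsf{rpos}(s)}$, and the two rightmost occurrences of $\mathrm{Rmin}(s)_{\mathsf{rpos}(s)}$ are not adjacent. Moreover for all $s$: $\mathsf{asc},\mathsf{rep},\mathsf{max},\mathsf{rmin}$ take equal values on $s$ and $f_{5,2}(s)$, $\mathsf{rpos}(s)=\mathsf{rpos}(f_{5,2}(s))-1$, $\mathsf{zero}(s)=\mathsf{zero}(f_{5,2}(s))+\chi(\mathsf{rpos}(s)=0)$ and $\mathsf{ealm}(s)=\mathsf{ealm}(f_{5,2}(s))-\chi(\mathrm{Prm}(s)_{\mathsf{rpos}(s)}=\mathsf{max}(s)+1)$.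
   Context: For a sequence $s$, $\mathsf{asc}(s)=|\{i:s_i<s_{i+1}\}|$. An ascent sequence is a sequence $s=(s_1,\dots,s_n)$ of non-negative integers with $s_1=0$, $s_i\le\mathsf{asc}(s_1,\dots,s_{i-1})+1$ for $i\ge2$; $\mathcal{A}_n$ is the set of those of length $n$, $|s|$ the length; $\mathcal{A}^*$ is the set of all ascent sequences except those of the form $(0,1,\dots,|s|-1)$. $\mathsf{rep}(s)=|s|-|\{s_i\}|$; $\mathsf{zero}(s)=|\{i:s_i=0\}|$; $\mathsf{max}(s)=|\{i:s_i=i-1\}|$; $\mathsf{ealm}(s)=s_{\mathsf{max}(s)+1}$ if $\mathsf{max}(s)\ne|s|$, else $0$. A right-to-left minimum is an entry $s_i$ with $s_i<s_j$ for all $j>i$; $\mathsf{rmin}(s)$ is their number; they are indexed $0,\dots,\mathsf{rmin}(s)-1$ from left to right, with values $\mathrm{Rmin}(s)_m$ and positions $\mathrm{Prm}(s)_m$. $\mathsf{rpos}(s)$: $0$ if $\mathsf{rmin}(s)=|s|$; otherwise the maximal $m$ such that the value $\mathrm{Rmin}(s)_m$ occurs at least twice after position $\mathrm{Prm}(s)_{m-1}$ (for $m=0$: at least twice in $s$), and $0$ if none. $\mathrm{sebr}(s)$ is the smallest entry strictly between the two rightmost occurrences of $\mathrm{Rmin}(s)_{\mathsf{rpos}(s)}$, and $0$ if they are adjacent; when $\mathsf{rpos}(s)=\mathsf{rmin}(s)-1$ one regards $\mathrm{sebr}(s)<\mathrm{Rmin}(s)_{\mathsf{rpos}(s)+1}$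 as true. $\chi(P)=1$ if $P$ holds, else $0$. *)

theory Defs
  imports Main
begin

text \<open>Sequences are lists of naturals; the paper's entry s_i (1-indexed) is s ! (i - 1).
  Positions (Prm, occurrences) are 1-indexed as in the paper.\<close>

definition asc :: "nat list \<Rightarrow> nat" where
  "asc s = card {i. i + 1 < length s \<and> s ! i < s ! (i + 1)}"

definition is_ascent_seq :: "nat list \<Rightarrow> bool" where
  "is_ascent_seq s \<longleftrightarrow>
     (\<forall>i < length s. s ! i \<le> (if i = 0 then 0 else asc (take i s) + 1))"

definition ascseqs :: "nat \<Rightarrow> nat list set" where
  "ascseqs n = {s. is_ascent_seq s \<and> length s = n}"

definition ascseqs_star :: "nat list set" where
  "ascseqs_star = {s. is_ascent_seq s \<and> s \<noteq> [0..<length s]}"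

definition rep :: "nat list \<Rightarrow> nat" where
  "rep s = length s - card (set s)"

definition zero :: "nat list \<Rightarrow> nat" where
  "zero s = card {i. i < length s \<and> s ! i = 0}"

definition maxst :: "nat list \<Rightarrow> nat" where
  "maxst s = card {i. 1 \<le> i \<and> i \<le> length s \<and> s ! (i - 1) = i - 1}"

definition ealm :: "nat list \<Rightarrow> nat" where
  "ealm s = (if maxst s \<noteq> length s then s ! (maxst s + 1 - 1) else 0)"

definition rmin_positions :: "nat list \<Rightarrow> nat list" where
  "rmin_positions s = filter (\<lambda>i. \<forall>j. i < j \<and> j \<le> length s \<longrightarrow> s ! (i - 1) < s ! (j - 1)) [1..<length s + 1]"

definition rmin :: "nat list \<Rightarrow> nat" where
  "rmin s = length (rmin_positions s)"

definition Prm :: "nat list \<Rightarrow> nat \<Rightarrow> nat" where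
  "Prm s m = rmin_positions s ! m"

definition Rmin :: "nat list \<Rightarrow> nat \<Rightarrow> nat" where
  "Rmin s m = s ! (Prm s m - 1)"

definition occs :: "nat list \<Rightarrow> nat \<Rightarrow> nat set" where
  "occs s v = {i. 1 \<le> i \<and> i \<le> length s \<and> s ! (i - 1) = v}"

definition rightmost_occ :: "nat list \<Rightarrow> nat \<Rightarrow> nat" where
  "rightmost_occ s v = Max (occs s v)"

definition second_rightmost_occ :: "nat list \<Rightarrow> nat \<Rightarrow> nat" where
  "second_rightmost_occ s v = Max (occs s v - {Max (occs s v)})"

definition rpos :: "nat list \<Rightarrow> nat" where
  "rpos s = (if rmin s = length s then 0
     else Max (insert 0 {m. m < rmin s \<and>
        2 \<le> card {i \<in> occs s (Rmin s m). m = 0 \<or> Prm s (m - 1) < i}}))"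

text \<open>smallest entry strictly between the two rightmost occurrences of Rmin_{rpos};
  0 if they are adjacent (or, by convention, if there are fewer than two occurrences).\<close>
definition sebr :: "nat list \<Rightarrow> nat" where
  "sebr s = (let v = Rmin s (rpos s); a = second_rightmost_occ s v; b = rightmost_occ s v in
     if card (occs s v) < 2 \<or> b = a + 1 then 0
     else Min {s ! (i - 1) | i. a < i \<and> i < b})"

definition adjacent :: "nat \<Rightarrow> nat \<Rightarrow> bool" where
  "adjacent i j \<longleftrightarrow> i + 1 = j \<or> j + 1 = i"

text \<open>The set T_{5,2}. The comparison sebr >= Rmin_{rpos+1} is regarded false when
  rpos = rmin - 1 (i.e. sebr < Rmin_{rpos+1} regarded true).\<close>
definition T52 :: "nat list set" where
  "T52 = {s \<in> ascseqs_star.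
     length s \<noteq> rmin s + 1 \<and> sebr s \<noteq> 0 \<and>
     (rpos s + 1 < rmin s \<and> sebr s \<ge> Rmin s (rpos s + 1)) \<and>
     Prm s (rpos s + 1) \<noteq> Prm s (rpos s) + 1}"

definition target52 :: "nat \<Rightarrow> nat list set" where
  "target52 n = {s \<in> ascseqs n.
     rpos s \<noteq> 0 \<and>
     \<not> adjacent (rightmost_occ s (Rmin s (rpos s - 1))) (second_rightmost_occ s (Rmin s (rpos s))) \<and>
     \<not> adjacent (second_rightmost_occ s (Rmin s (rpos s))) (rightmost_occ s (Rmin s (rpos s)))}"

definition chi :: "bool \<Rightarrow> nat" where
  "chi P = (if P then 1 else 0)"

end

theory Submission
  imports Defs
begin
abbreviation rminP :: "nat list \<Rightarrow> nat \<Rightarrow> bool" where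
  "rminP s i \<equiv> \<forall>j. i < j \<and> j \<le> length s \<longrightarrow> s ! (i - 1) < s ! (j - 1)"

lemma set_rminpos: "i \<in> set (rmin_positions s) \<longleftrightarrow> 1 \<le> i \<and> i \<le> length s \<and> rminP s i"
  unfolding rmin_positions_def by auto

lemma sorted_rminpos: "sorted_wrt (<) (rmin_positions s)"
  unfolding rmin_positions_def by (rule sorted_wrt_filter, rule sorted_wrt_upt)

lemma distinct_rminpos: "distinct (rmin_positions s)"
  unfolding rmin_positions_def by simp

lemma Prm_props: "m < rmin s \<Longrightarrow> 1 \<le> Prm s m \<and> Prm s m \<le> length s \<and> rminP s (Prm s m)"
  using set_rminpos[of "Prm s m" s] unfolding Prm_def rmin_def by (metis nth_mem)

lemma Prm_mono: "m < m' \<Longrightarrow> m' < rmin s \<Longrightarrow> Prm s m < Prm s m'"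
  using sorted_rminpos[of s] unfolding Prm_def rmin_def by (simp add: sorted_wrt_iff_nth_less)

lemma Prm_mono_iff: "m < rmin s \<Longrightarrow> m' < rmin s \<Longrightarrow> Prm s m < Prm s m' \<longleftrightarrow> m < m'"
  by (metis Prm_mono less_asym nat_neq_iff)

lemma Prm_inj: "m < rmin s \<Longrightarrow> m' < rmin s \<Longrightarrow> Prm s m = Prm s m' \<longleftrightarrow> m = m'"
  by (metis Prm_mono less_irrefl nat_neq_iff)

lemma after_Prm: "m < rmin s \<Longrightarrow> Prm s m < j \<Longrightarrow> j \<le> length s \<Longrightarrow> Rmin s m < s ! (j - 1)"
  using Prm_props[of m s] unfolding Rmin_def by blast

lemma Rmin_mono: "m < m' \<Longrightarrow> m' < rmin s \<Longrightarrow> Rmin s m < Rmin s m'"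
  using after_Prm[of m s "Prm s m'"] Prm_mono[of m m' s] Prm_props[of m' s]
  unfolding Rmin_def by auto

lemma Rmin_mono_le: "m \<le> m' \<Longrightarrow> m' < rmin s \<Longrightarrow> Rmin s m \<le> Rmin s m'"
  using Rmin_mono[of m m' s] by (cases "m = m'") auto

lemma in_rminpos_Prm: "i \<in> set (rmin_positions s) \<Longrightarrow> \<exists>m < rmin s. Prm s m = i"
  unfolding Prm_def rmin_def by (metis in_set_conv_nth)

lemma suffix_min:
  assumes "1 \<le> j" "j \<le> length s"
  shows "\<exists>m < rmin s. j \<le> Prm s m \<and> Rmin s m \<le> s ! (j - 1)"
proof -
  define I where "I = {j..length s}"
  define mv where "mv = Min ((\<lambda>l. s ! (l - 1)) ` I)"
  define k where "k = Max {l \<in> I. s ! (l - 1) = mv}"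
  have fI: "finite I" "I \<noteq> {}" using assms unfolding I_def by auto
  have mvin: "mv \<in> (\<lambda>l. s ! (l - 1)) ` I" unfolding mv_def using fI by simp
  have mvle: "\<And>l. l \<in> I \<Longrightarrow> mv \<le> s ! (l - 1)" unfolding mv_def using fI by simp
  have ne: "{l \<in> I. s ! (l - 1) = mv} \<noteq> {}" using mvin by auto
  have kin: "k \<in> {l \<in> I. s ! (l - 1) = mv}" unfolding k_def using fI ne by (intro Max_in) auto
  have kmax: "\<And>l. l \<in> I \<Longrightarrow> s ! (l - 1) = mv \<Longrightarrow> l \<le> k" unfolding k_def using fI by auto
  have "rminP s k"
  proof (intro allI impI)
    fix l assume "k < l \<and> l \<le> length s"
    then have "l \<in> I" using kin unfolding I_def by auto
    then show "s ! (k - 1) < s ! (l - 1)" using kmax[of l] mvle[of l] kin \<open>k < l \<and> l \<le> length s\<close>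
      by (metis (mono_tags, lifting) le_neq_implies_less mem_Collect_eq not_le)
  qed
  then have "k \<in> set (rmin_positions s)" using kin assms unfolding set_rminpos I_def by auto
  then obtain m where "m < rmin s" "Prm s m = k" using in_rminpos_Prm by blast
  then show ?thesis using kin mvle[of j] assms unfolding Rmin_def I_def by auto
qed

lemma after_Prm_ge:
  assumes "Suc m < rmin s" "Prm s m < j" "j \<le> length s"
  shows "Rmin s (Suc m) \<le> s ! (j - 1)"
proof -
  obtain m' where m': "m' < rmin s" "j \<le> Prm s m'" "Rmin s m' \<le> s ! (j - 1)"
    using suffix_min[of j s] assms by auto
  have "m < m'" using Prm_mono_iff[of m s m'] m' assms by auto
  then show ?thesis using Rmin_mono_le[of "Suc m" m' s] m' by auto
qed

lemma finite_occs: "finite (occs s v)" unfolding occs_def by auto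

lemma Max_eqI': "finite S \<Longrightarrow> y \<in> S \<Longrightarrow> (\<And>i. i \<in> S \<Longrightarrow> i \<le> y) \<Longrightarrow> Max S = y"
  by (simp add: Max_eqI)

lemma rightmost_Prm: "m < rmin s \<Longrightarrow> rightmost_occ s (Rmin s m) = Prm s m"
  unfolding rightmost_occ_def
proof (rule Max_eqI'[OF finite_occs])
  assume "m < rmin s"
  then show "Prm s m \<in> occs s (Rmin s m)" using Prm_props[of m s] unfolding occs_def Rmin_def by auto
  fix i assume "i \<in> occs s (Rmin s m)"
  then show "i \<le> Prm s m" using after_Prm[of m s i] \<open>m < rmin s\<close> unfolding occs_def
    by (metis (mono_tags, lifting) less_irrefl mem_Collect_eq not_le)
qed

lemma upt_split3:
  assumes "1 \<le> x" "x < y" "y \<le> L"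
  shows "[1..<L+1] = [1..<x] @ x # [x+1..<y] @ y # [y+1..<L+1]"
proof -
  have "[1..<L+1] = [1..<x] @ [x..<L+1]" using assms upt_add_eq_append[of 1 x "L+1-x"] by simp
  also have "[x..<L+1] = x # [x+1..<L+1]" using assms upt_conv_Cons by simp
  also have "[x+1..<L+1] = [x+1..<y] @ [y..<L+1]" using assms upt_add_eq_append[of "x+1" y "L+1-y"] by simp
  also have "[y..<L+1] = y # [y+1..<L+1]" using assms upt_conv_Cons by simp
  finally show ?thesis by simp
qed

lemma upd_rmin:
  assumes B: "B = A[y-1 := u]" and xy: "1 \<le> x" "x < y" "y \<le> length A"
    and Ax: "A!(x-1) = v" and Ay: "A!(y-1) = v" and vu: "v < u"
    and big: "\<forall>j. x < j \<and> j \<le> length A \<and> j \<noteq> y \<longrightarrow> u \<le> A!(j-1)"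
    and k: "y < k" "k \<le> length A" "A!(k-1) = u"
  shows "\<exists>F1 F2. rmin_positions A = F1 @ y # F2 \<and> rmin_positions B = F1 @ x # F2"
proof -
  have lenB: "length B = length A" using B by simp
  have Bj: "\<And>j. j \<noteq> y \<Longrightarrow> 1 \<le> j \<Longrightarrow> B!(j-1) = A!(j-1)" using B xy by (simp add: nth_list_update)
  have By: "B!(y-1) = u" using B xy by simp
  let ?PA = "\<lambda>i. \<forall>j. i < j \<and> j \<le> length A \<longrightarrow> A ! (i - 1) < A ! (j - 1)"
  let ?PB = "\<lambda>i. \<forall>j. i < j \<and> j \<le> length B \<longrightarrow> B ! (i - 1) < B ! (j - 1)"
  have sp: "[1..<length A+1] = [1..<x] @ x # [x+1..<y] @ y # [y+1..<length A+1]"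
    using upt_split3 xy by blast
  have c1: "filter ?PB [1..<x] = filter ?PA [1..<x]"
  proof (rule filter_cong[OF refl])
    fix i assume "i \<in> set [1..<x]"
    then have i: "1 \<le> i" "i < x" by auto
    show "?PB i = ?PA i"
    proof
      assume h: "?PB i"
      show "?PA i"
      proof (intro allI impI)
        fix j assume j: "i < j \<and> j \<le> length A"
        have "B!(i-1) < B!(x-1)" using h i xy lenB by auto
        then have "A!(i-1) < v" using Bj[of i] Bj[of x] i xy Ax by auto
        then show "A!(i-1) < A!(j-1)"
          using h j Bj[of i] Bj[of j] i xy Ay lenB by (cases "j = y") auto
      qed
    next
      assume h: "?PA i"
      show "?PB i"
      proof (intro allI impI)
        fix j assume j: "i < j \<and> j \<le> length B"
        have "A!(i-1) < A!(y-1)" using h i xy by auto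
        then show "B!(i-1) < B!(j-1)"
          using h j Bj[of i] Bj[of j] i xy Ay By lenB vu by (cases "j = y") auto
      qed
    qed
  qed
  have c2: "filter ?PB [y+1..<length A+1] = filter ?PA [y+1..<length A+1]"
  proof (rule filter_cong[OF refl])
    fix i assume "i \<in> set [y+1..<length A+1]"
    then have i: "y < i" by auto
    have "\<And>j. i \<le> j \<Longrightarrow> B!(j-1) = A!(j-1)" using Bj i xy by auto
    then show "?PB i = ?PA i" using lenB i by auto
  qed
  have c3: "filter ?PA [x+1..<y] = []"
  proof (rule filter_False, intro ballI)
    fix i assume "i \<in> set [x+1..<y]"
    then have i: "x < i" "i < y" by auto
    then have "u \<le> A!(i-1)" using big xy by auto
    then show "\<not> ?PA i" using k i by (metis le_less_trans less_imp_le_nat not_le)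
  qed
  have c4: "filter ?PB [x+1..<y] = []"
  proof (rule filter_False, intro ballI)
    fix i assume "i \<in> set [x+1..<y]"
    then have i: "x < i" "i < y" by auto
    then have "u \<le> B!(i-1)" using big xy Bj by auto
    moreover have "B!(k-1) = u" using Bj[of k] k xy by auto
    ultimately show "\<not> ?PB i" using k i lenB by (metis le_less_trans less_imp_le_nat not_le)
  qed
  have p1: "\<not> ?PA x" using xy Ax Ay by auto
  have p2: "?PA y"
  proof (intro allI impI)
    fix j assume j: "y < j \<and> j \<le> length A"
    then have "u \<le> A!(j-1)" using big xy by auto
    then show "A!(y-1) < A!(j-1)" using Ay vu by auto
  qed
  have p3: "?PB x"
  proof (intro allI impI)
    fix j assume j: "x < j \<and> j \<le> length B"
    show "B!(x-1) < B!(j-1)"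
    proof (cases "j = y")
      case True then show ?thesis using By Bj[of x] xy Ax vu by auto
    next
      case False then show ?thesis using big j lenB Bj[of x] Bj[of j] xy Ax vu by auto
    qed
  qed
  have p4: "\<not> ?PB y" using By Bj[of k] k xy lenB by auto
  have "rmin_positions A = filter ?PA ([1..<x] @ x # [x+1..<y] @ y # [y+1..<length A+1])"
    unfolding rmin_positions_def by (simp only: sp)
  also have "\<dots> = filter ?PA [1..<x] @ y # filter ?PA [y+1..<length A+1]"
    by (simp only: filter_append filter.simps c3 p1 p2[THEN eqTrueI] if_True if_False append_Nil)
  finally have "rmin_positions A = filter ?PA [1..<x] @ y # filter ?PA [y+1..<length A+1]" .
  moreover have "rmin_positions B = filter ?PB ([1..<x] @ x # [x+1..<y] @ y # [y+1..<length A+1])"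
    unfolding rmin_positions_def lenB by (simp only: sp)
  moreover have "filter ?PB ([1..<x] @ x # [x+1..<y] @ y # [y+1..<length A+1]) = filter ?PA [1..<x] @ x # filter ?PA [y+1..<length A+1]"
    by (simp only: filter_append filter.simps c1 c2 c4 p3[THEN eqTrueI] p4 if_True if_False append_Nil)
  ultimately have "rmin_positions A = filter ?PA [1..<x] @ y # filter ?PA [y+1..<length A+1] \<and>
     rmin_positions B = filter ?PA [1..<x] @ x # filter ?PA [y+1..<length A+1]" by (simp only:)
  then show ?thesis by blast
qed

lemma upd_conseq:
  assumes RA: "rmin_positions A = F1 @ y # F2" and RB: "rmin_positions B = F1 @ x # F2"
    and B: "B = A[y-1:=u]" and Axy: "A!(x-1) = A!(y-1)" and xy: "1 \<le> x" "x < y" "y \<le> length A"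
  shows "rmin B = rmin A" "Prm A (length F1) = y" "Prm B (length F1) = x"
    "\<And>m. m \<noteq> length F1 \<Longrightarrow> Prm B m = Prm A m" "\<And>m. m < rmin A \<Longrightarrow> Rmin B m = Rmin A m"
    "length F1 < rmin A"
proof -
  show r: "rmin B = rmin A" unfolding rmin_def using RA RB by simp
  show pA: "Prm A (length F1) = y" unfolding Prm_def using RA by simp
  show pB: "Prm B (length F1) = x" unfolding Prm_def using RB by simp
  show pm: "\<And>m. m \<noteq> length F1 \<Longrightarrow> Prm B m = Prm A m" unfolding Prm_def using RA RB
    by (auto simp: nth_append nth_Cons split: nat.splits)
  show lt: "length F1 < rmin A" unfolding rmin_def using RA by simp
  fix m assume m: "m < rmin A"
  show "Rmin B m = Rmin A m"
  proof (cases "m = length F1")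
    case True
    then show ?thesis unfolding Rmin_def using pA pB B Axy xy by (simp add: nth_list_update)
  next
    case False
    then have "Prm A m \<noteq> y" using Prm_inj[of m A "length F1"] m lt pA by auto
    moreover have "1 \<le> Prm A m" using Prm_props[OF m] by auto
    ultimately have "Prm A m - 1 \<noteq> y - 1" using xy by auto
    then show ?thesis unfolding Rmin_def using pm[OF False] B by simp
  qed
qed

definition condp :: "nat list \<Rightarrow> nat \<Rightarrow> bool" where
  "condp s m \<longleftrightarrow> 2 \<le> card {i \<in> occs s (Rmin s m). m = 0 \<or> Prm s (m - 1) < i}"

lemma rpos_alt: "rmin s \<noteq> length s \<Longrightarrow> rpos s = Max (insert 0 {m. m < rmin s \<and> condp s m})"
  unfolding rpos_def condp_def by simp

lemma rpos_eqI:
  assumes "rmin s \<noteq> length s" "p < rmin s" "condp s p" "\<And>m. p < m \<Longrightarrow> m < rmin s \<Longrightarrow> \<not> condp s m"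
  shows "rpos s = p"
  unfolding rpos_alt[OF assms(1)]
proof (rule Max_eqI)
  show "finite (insert 0 {m. m < rmin s \<and> condp s m})" by auto
  show "p \<in> insert 0 {m. m < rmin s \<and> condp s m}" using assms by auto
  fix m assume "m \<in> insert 0 {m. m < rmin s \<and> condp s m}"
  then show "m \<le> p" using assms(4)[of m] by (cases "p < m") auto
qed

lemma rpos_ge: "rmin s \<noteq> length s \<Longrightarrow> m < rmin s \<Longrightarrow> condp s m \<Longrightarrow> m \<le> rpos s"
  unfolding rpos_alt by (rule Max_ge) auto

lemma rpos_nz:
  assumes "rpos s \<noteq> 0"
  shows "rmin s \<noteq> length s" "rpos s < rmin s" "condp s (rpos s)"
proof -
  show a: "rmin s \<noteq> length s" using assms unfolding rpos_def by auto
  have "rpos s \<in> insert 0 {m. m < rmin s \<and> condp s m}"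
    unfolding rpos_alt[OF a] by (rule Max_in) auto
  then show "rpos s < rmin s" "condp s (rpos s)" using assms by auto
qed

lemma rmin_lt_length:
  assumes "1 \<le> i" "i \<le> length s" "i \<notin> set (rmin_positions s)"
  shows "rmin s < length s"
proof -
  have "rmin s < length [1..<length s + 1]" unfolding rmin_def rmin_positions_def
    by (rule length_filter_less) (use assms set_rminpos[of i s] in auto)
  then show ?thesis by (simp only: length_upt)
qed

lemma asc_take: "asc (take i s) = card {k. k + 1 < min i (length s) \<and> s ! k < s ! (k + 1)}"
  unfolding asc_def by (rule arg_cong[where f=card]) auto

lemma asc_le: "asc xs \<le> length xs - 1"
proof -
  have "{i. i + 1 < length xs \<and> xs ! i < xs ! (i + 1)} \<subseteq> {..<length xs - 1}" by auto
  then show ?thesis unfolding asc_def using card_mono[of "{..<length xs - 1}"] by fastforce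
qed

lemma asc_take_mono: "i \<le> j \<Longrightarrow> asc (take i s) \<le> asc (take j s)"
  unfolding asc_take by (rule card_mono) (rule finite_subset[of _ "{..<length s}"], auto)

lemma asc_pairs_eq:
  assumes "length t = length s" "\<forall>k. k + 1 < length s \<longrightarrow> (t!k < t!(k+1) \<longleftrightarrow> s!k < s!(k+1))"
  shows "asc (take i t) = asc (take i s)" "asc t = asc s"
proof -
  show "asc (take i t) = asc (take i s)" unfolding asc_take using assms
    by (intro arg_cong[where f=card]) auto
  show "asc t = asc s" unfolding asc_def using assms
    by (intro arg_cong[where f=card]) auto
qed

lemma ascseq_bound: "is_ascent_seq s \<Longrightarrow> k < length s \<Longrightarrow> s ! k \<le> k"
proof -
  assume a: "is_ascent_seq s" "k < length s"
  show ?thesis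
  proof (cases "k = 0")
    case True then show ?thesis using a unfolding is_ascent_seq_def by auto
  next
    case False
    then have "s ! k \<le> asc (take k s) + 1" using a unfolding is_ascent_seq_def by auto
    moreover have "asc (take k s) \<le> k - 1" using asc_le[of "take k s"] a by auto
    ultimately show ?thesis using False by linarith
  qed
qed

lemma upd_asc_pairs:
  fixes A B :: "nat list"
  assumes B: "B = A[y-1 := u]" and y: "2 \<le> y" "y \<le> length A" and Ay: "A!(y-1) = v" and vu: "v < u"
    and l: "u \<le> A!(y-2)" and r: "y < length A \<Longrightarrow> u < A!y"
  shows "\<forall>k. k + 1 < length A \<longrightarrow> (B!k < B!(k+1) \<longleftrightarrow> A!k < A!(k+1))"
proof (intro allI impI)
  fix k assume k: "k + 1 < length A"
  consider "k = y - 2" | "k = y - 1" | "k \<noteq> y - 2 \<and> k \<noteq> y - 1" by blast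
  then show "B!k < B!(k+1) \<longleftrightarrow> A!k < A!(k+1)"
  proof cases
    case 1
    then have "k + 1 = y - 1" using y by auto
    then have e1: "B!k = A!(y-2)" and e2: "B!(k+1) = u" using 1 B y by (auto simp: nth_list_update)
    have e3: "A!(k+1) = v" using \<open>k + 1 = y - 1\<close> Ay by simp
    have e4: "A!k = A!(y-2)" using 1 by simp
    have "\<not> B!k < B!(k+1)" unfolding e1 e2 using l by simp
    moreover have "\<not> A!k < A!(k+1)" unfolding e4 e3 using l vu by simp
    ultimately have "\<not> B!k < B!(k+1)" "\<not> A!k < A!(k+1)" by blast+
    then show ?thesis by blast
  next
    case 2
    then have "k + 1 = y" using y by auto
    then show ?thesis using 2 B y Ay vu r k by (auto simp: nth_list_update)
  next
    case 3
    then have "k + 1 \<noteq> y - 1" using y by auto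
    then show ?thesis using 3 B by (auto simp: nth_list_update)
  qed
qed

lemma upd_ascseq:
  assumes A: "is_ascent_seq A" and B: "B = A[y-1 := u]" and y: "2 \<le> y" "y \<le> length A"
    and pairs: "\<forall>k. k + 1 < length A \<longrightarrow> (B!k < B!(k+1) \<longleftrightarrow> A!k < A!(k+1))"
    and u: "u \<le> asc (take (y-1) A) + 1"
  shows "is_ascent_seq B"
  unfolding is_ascent_seq_def
proof (intro allI impI)
  fix i assume i: "i < length B"
  have len: "length B = length A" using B by simp
  have ae: "asc (take i B) = asc (take i A)" using asc_pairs_eq(1)[OF len pairs] .
  show "B ! i \<le> (if i = 0 then 0 else asc (take i B) + 1)"
  proof (cases "i = y - 1")
    case True
    then show ?thesis using u ae y B by simp
  next
    case False
    then have "B ! i = A ! i" using B by simp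
    moreover have "A ! i \<le> (if i = 0 then 0 else asc (take i A) + 1)"
      using A i len unfolding is_ascent_seq_def by auto
    ultimately show ?thesis using ae by (cases "i = 0") auto
  qed
qed

lemma maxst_prefix:
  assumes A: "is_ascent_seq s" and i: "i \<le> length s" "1 \<le> j" "j \<le> i" and si: "s!(i-1) = i-1"
  shows "s!(j-1) = j-1"
proof (cases "i = 1")
  case True
  have "0 < length s" using i by auto
  then show ?thesis using True i ascseq_bound[OF A, of 0] by auto
next
  case False
  then have i2: "2 \<le> i" using i by auto
  have "i - 1 < length s" "i - 1 \<noteq> 0" using i i2 by auto
  then have "s!(i-1) \<le> asc (take (i-1) s) + 1" using A unfolding is_ascent_seq_def by auto
  then have ge: "i - 2 \<le> asc (take (i-1) s)" using si i2 by linarith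
  let ?S = "{k. k + 1 < min (i-1) (length s) \<and> s ! k < s ! (k + 1)}"
  have sub: "?S \<subseteq> {..<i-2}" using i2 by auto
  have "card ?S = i - 2" using ge asc_take[of "i-1" s] card_mono[OF _ sub] by simp
  then have "?S = {..<i-2}" using sub by (intro card_subset_eq) auto
  then have asc_all: "\<And>k. k < i - 2 \<Longrightarrow> s!k < s!(k+1)" by blast
  have up: "\<And>k. k \<le> i - 2 \<Longrightarrow> k \<le> s!k"
  proof -
    fix k show "k \<le> i - 2 \<Longrightarrow> k \<le> s!k"
    proof (induction k)
      case 0 then show ?case by simp
    next
      case (Suc k)
      then have "s!k < s!(k+1)" using asc_all by auto
      then show ?case using Suc by auto
    qed
  qed
  have "\<And>k. k \<le> i - 2 \<Longrightarrow> s!k = k"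
  proof -
    fix k assume k: "k \<le> i - 2"
    then have "k < length s" using i i2 by linarith
    then have "s!k \<le> k" using ascseq_bound[OF A] by blast
    then show "s!k = k" using up[OF k] by simp
  qed
  then show ?thesis using si i by (cases "j = i") auto
qed

lemma maxst_set:
  assumes A: "is_ascent_seq s"
  shows "{i. 1 \<le> i \<and> i \<le> length s \<and> s ! (i - 1) = i - 1} = {1..maxst s}"
proof -
  let ?S = "{i. 1 \<le> i \<and> i \<le> length s \<and> s ! (i - 1) = i - 1}"
  have fin: "finite ?S" by auto
  show ?thesis
  proof (cases "?S = {}")
    case True then show ?thesis unfolding maxst_def by auto
  next
    case False
    define M where "M = Max ?S"
    have Min: "M \<in> ?S" unfolding M_def using fin False by (rule Max_in)
    have "?S = {1..M}"
    proof
      show "?S \<subseteq> {1..M}" unfolding M_def using fin by auto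
      show "{1..M} \<subseteq> ?S" using maxst_prefix[OF A, of M] Min by auto
    qed
    then show ?thesis unfolding maxst_def by simp
  qed
qed

lemma Rmin0:
  assumes A: "is_ascent_seq s" "s \<noteq> []"
  shows "0 < rmin s" "Rmin s 0 = 0"
proof -
  have "1 \<le> length s" using A by (cases s) auto
  then obtain m where m: "m < rmin s" "Rmin s m \<le> s ! 0" using suffix_min[of 1 s] by auto
  have "s ! 0 = 0" using ascseq_bound[OF A(1), of 0] A by auto
  then show "0 < rmin s" "Rmin s 0 = 0" using m Rmin_mono_le[of 0 m s] by auto
qed

lemma occs_upd_same: "1 \<le> y \<Longrightarrow> y \<le> length s \<Longrightarrow> occs (s[y-1 := u]) u = insert y (occs s u)"
  unfolding occs_def by (auto simp: nth_list_update)

lemma occs_upd_other: "1 \<le> y \<Longrightarrow> y \<le> length s \<Longrightarrow> z \<noteq> u \<Longrightarrow> occs (s[y-1 := u]) z = occs s z - {y}"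
  unfolding occs_def by (auto simp: nth_list_update)

lemma card2: "finite S \<Longrightarrow> i \<in> S \<Longrightarrow> j \<in> S \<Longrightarrow> i \<noteq> j \<Longrightarrow> 2 \<le> card S"
  using card_mono[of S "{i, j}"] by auto

definition f52 :: "nat list \<Rightarrow> nat list" where
  "f52 s = s[Prm s (rpos s) - 1 := Rmin s (rpos s + 1)]"

definition g52 :: "nat list \<Rightarrow> nat list" where
  "g52 t = t[second_rightmost_occ t (Rmin t (rpos t)) - 1 := Rmin t (rpos t - 1)]"

lemma fwd:
  assumes sT: "s \<in> T52"
  shows "f52 s \<in> target52 (length s)" "g52 (f52 s) = s"
    "asc s = asc (f52 s)" "rep s = rep (f52 s)" "maxst s = maxst (f52 s)" "rmin s = rmin (f52 s)"
    "rpos s + 1 = rpos (f52 s)"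
    "zero s = zero (f52 s) + chi (rpos s = 0)"
    "ealm s + chi (Prm s (rpos s) = maxst s + 1) = ealm (f52 s)"
proof -
  have asq: "is_ascent_seq s" and se: "sebr s \<noteq> 0" and pr: "rpos s + 1 < rmin s"
    and sw: "Rmin s (rpos s + 1) \<le> sebr s" and cn: "Prm s (rpos s + 1) \<noteq> Prm s (rpos s) + 1"
    using sT unfolding T52_def ascseqs_star_def by auto
  define p where "p = rpos s"
  define v where "v = Rmin s p"
  define b where "b = Prm s p"
  define w where "w = Rmin s (p+1)"
  define c where "c = Prm s (p+1)"
  define a where "a = second_rightmost_occ s v"
  define t where "t = s[b-1 := w]"
  define L where "L = length s"
  note L_def[simp]
  have ft: "f52 s = t" unfolding f52_def t_def b_def w_def p_def by simp
  have p1: "p + 1 < rmin s" using pr p_def by simp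
  have pp: "p < rmin s" using p1 by simp
  have b1: "1 \<le> b" "b \<le> L" "rminP s b" using Prm_props[OF pp] b_def L_def by auto
  have c1: "b < c" "c \<le> L" using Prm_mono[of p "p+1" s] p1 Prm_props[OF p1] b_def c_def L_def by auto
  have sb: "s!(b-1) = v" unfolding v_def Rmin_def b_def ..
  have sc: "s!(c-1) = w" unfolding w_def Rmin_def c_def ..
  have vw: "v < w" unfolding v_def w_def using Rmin_mono p1 by simp
  have rb: "rightmost_occ s v = b" unfolding v_def b_def using rightmost_Prm[OF pp] .
  have sebr_eq: "\<not> (card (occs s v) < 2 \<or> b = a + 1)" and
    sebr_min: "sebr s = Min {s ! (i - 1) | i. a < i \<and> i < b}"
    using se rb unfolding sebr_def Let_def a_def v_def p_def b_def rightmost_occ_def by (auto split: if_splits)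
  have ocb: "\<And>i. i \<in> occs s v \<Longrightarrow> i \<le> b" using rb finite_occs unfolding rightmost_occ_def by auto
  have c2v: "2 \<le> card (occs s v)" using sebr_eq by simp
  have "occs s v - {b} \<noteq> {}"
  proof
    assume "occs s v - {b} = {}"
    then have "occs s v \<subseteq> {b}" by blast
    then have "card (occs s v) \<le> 1" using card_mono[of "{b}" "occs s v"] by simp
    then show False using c2v by simp
  qed
  moreover have rbm: "Max (occs s v) = b" using rb unfolding rightmost_occ_def .
  ultimately have ain: "a \<in> occs s v - {b}" unfolding a_def second_rightmost_occ_def rbm
    using finite_occs by (intro Max_in) auto
  then have a1: "1 \<le> a" "a < b" "s!(a-1) = v" using ocb unfolding occs_def by force+
  have ab: "b \<noteq> a + 1" using sebr_eq by simp
  have finB: "finite {s ! (i - 1) | i. a < i \<and> i < b}" by (rule finite_image_set) simp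
  have betw: "\<And>j. a < j \<Longrightarrow> j < b \<Longrightarrow> w \<le> s!(j-1)"
  proof -
    fix j assume "a < j" "j < b"
    then have "sebr s \<le> s!(j-1)" unfolding sebr_min using finB by (intro Min_le) auto
    then show "w \<le> s!(j-1)" using sw unfolding w_def p_def by simp
  qed
  have aft: "\<And>j. b < j \<Longrightarrow> j \<le> L \<Longrightarrow> w \<le> s!(j-1) \<and> v < s!(j-1)"
    using after_Prm_ge[of p s] after_Prm[OF pp] p1 unfolding w_def v_def b_def L_def by auto
  have "\<not> rminP s a"
  proof
    assume "rminP s a"
    then have "s!(a-1) < s!(b-1)" using a1 b1 L_def by auto
    then show False using a1 sb by simp
  qed
  then have anr: "a \<notin> set (rmin_positions s)" unfolding set_rminpos by blast
  have rl: "rmin s \<noteq> length s" using rmin_lt_length[OF a1(1) _ anr] a1 b1 L_def by auto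
  have ncond: "\<And>m. p < m \<Longrightarrow> m < rmin s \<Longrightarrow> \<not> condp s m" using rpos_ge[OF rl] p_def by fastforce
  have onlyc: "\<And>j. b < j \<Longrightarrow> j \<le> L \<Longrightarrow> s!(j-1) = w \<Longrightarrow> j = c"
  proof (rule ccontr)
    fix j assume j: "b < j" "j \<le> L" "s!(j-1) = w" "j \<noteq> c"
    have "condp s (p+1)" unfolding condp_def
      by (rule card2[of _ j c]) (use j c1 sc L_def in \<open>auto simp: occs_def b_def w_def\<close>)
    then show False using ncond p1 by simp
  qed
  have big: "\<forall>j. a < j \<and> j \<le> length s \<and> j \<noteq> b \<longrightarrow> w \<le> s!(j-1)"
  proof (intro allI impI)
    fix j assume j: "a < j \<and> j \<le> length s \<and> j \<noteq> b"
    show "w \<le> s!(j-1)"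
    proof (cases "j < b")
      case True then show ?thesis using betw j by simp
    next
      case False then show ?thesis using aft[of j] j L_def by simp
    qed
  qed
  obtain F1 F2 where RA: "rmin_positions s = F1 @ b # F2" and RB: "rmin_positions t = F1 @ a # F2"
    using upd_rmin[OF t_def a1(1) a1(2) _ a1(3) sb vw big c1(1) _ sc] b1 c1 L_def by auto
  note cq = upd_conseq[OF RA RB t_def _ a1(1) a1(2)] 
  have cq1: "rmin t = rmin s" "Prm s (length F1) = b" "Prm t (length F1) = a"
     "\<And>m. m \<noteq> length F1 \<Longrightarrow> Prm t m = Prm s m" "\<And>m. m < rmin s \<Longrightarrow> Rmin t m = Rmin s m"
     "length F1 < rmin s"
    using cq a1 sb b1 L_def by auto
  have lF: "length F1 = p" using Prm_inj[OF cq1(6) pp] cq1(2) b_def by simp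
  have ln: "length t = L" unfolding t_def L_def by simp
  have tj: "\<And>j. j \<noteq> b \<Longrightarrow> 1 \<le> j \<Longrightarrow> t!(j-1) = s!(j-1)" unfolding t_def using b1 by (simp add: nth_list_update)
  have tb: "t!(b-1) = w" unfolding t_def using b1 L_def by simp
  have rpt: "rpos t = p + 1"
  proof (rule rpos_eqI)
    show "rmin t \<noteq> length t" using rl cq1(1) ln L_def by simp
    show "p + 1 < rmin t" using p1 cq1(1) by simp
    show "condp t (p+1)" unfolding condp_def
      apply (rule card2[of _ b c])
      using cq1 lF c1 b1 a1 tb tj[of c] sc p1 unfolding occs_def w_def by (auto simp: ln)
    fix m assume m: "p + 1 < m" "m < rmin t"
    have Pm: "Prm t (m-1) = Prm s (m-1)" using cq1(4) lF m by simp
    have Pc: "c \<le> Prm s (m-1)"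
    proof (cases "p + 1 = m - 1")
      case True then show ?thesis unfolding c_def by simp
    next
      case False
      then have "p + 1 < m - 1" "m - 1 < rmin s" using m cq1(1) by auto
      then show ?thesis unfolding c_def using Prm_mono[of "p+1" "m-1" s] by simp
    qed
    have "{i \<in> occs t (Rmin t m). m = 0 \<or> Prm t (m - 1) < i} = {i \<in> occs s (Rmin s m). m = 0 \<or> Prm s (m - 1) < i}"
      using cq1(5)[of m] m cq1(1) Pm Pc c1 tj unfolding occs_def by (auto simp: ln L_def)
    then show "\<not> condp t m" using ncond[of m] m cq1(1) unfolding condp_def by simp
  qed
  show "rpos s + 1 = rpos (f52 s)" using rpt ft p_def by simp
  show "rmin s = rmin (f52 s)" using cq1(1) ft by simp
  have Rt: "Rmin t p = v" "Rmin t (p+1) = w" using cq1(5) pp p1 v_def w_def by auto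
  have occv: "occs t v = occs s v - {b}" unfolding t_def using occs_upd_other[of b s v w] b1 vw L_def by simp
  have rta: "rightmost_occ t v = a" unfolding rightmost_occ_def occv a_def second_rightmost_occ_def
    using rb unfolding rightmost_occ_def by simp
  have occw: "occs t w = insert b (occs s w)" unfolding t_def using occs_upd_same[of b s w] b1 L_def by simp
  have rtw: "Max (occs t w) = c"
  proof (rule Max_eqI'[OF finite_occs])
    show "c \<in> occs t w" unfolding occw using c1 sc unfolding occs_def by auto
    fix i assume "i \<in> occs t w"
    show "i \<le> c"
    proof (rule ccontr)
      assume "\<not> i \<le> c"
      then have ib: "i \<noteq> b" "c < i" using c1 by auto
      then have "s!(i-1) = w" "i \<le> length s" using \<open>i \<in> occs t w\<close> tj[of i] ln unfolding occw occs_def by auto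
      then show False using after_Prm[OF p1, of i] ib unfolding w_def c_def by simp
    qed
  qed
  have stw: "second_rightmost_occ t w = b" unfolding second_rightmost_occ_def rtw
  proof (rule Max_eqI')
    show "finite (occs t w - {c})" using finite_occs by simp
    show "b \<in> occs t w - {c}" unfolding occw using c1 by simp
    fix i assume i: "i \<in> occs t w - {c}"
    show "i \<le> b"
    proof (rule ccontr)
      assume "\<not> i \<le> b"
      then have "s!(i-1) = w" "i \<le> L" using i tj[of i] ln unfolding occw occs_def L_def by auto
      then show False using onlyc[of i] i \<open>\<not> i \<le> b\<close> by auto
    qed
  qed
  have tasc_pairs: "\<forall>k. k + 1 < length s \<longrightarrow> (t!k < t!(k+1) \<longleftrightarrow> s!k < s!(k+1))"
  proof (rule upd_asc_pairs[OF t_def _ _ sb vw])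
    show "2 \<le> b" using a1 by simp
    show "b \<le> length s" using b1 L_def by simp
    show "w \<le> s!(b-2)" using betw[of "b-1"] a1 ab by (simp add: numeral_2_eq_2)
    assume "b < length s"
    then have "w \<le> s!(b+1-1)" "s!(b+1-1) \<noteq> w" using aft[of "b+1"] onlyc[of "b+1"] cn
      unfolding b_def c_def p_def L_def by auto
    then show "w < s!b" by simp
  qed
  have ascs: "asc t = asc s" using asc_pairs_eq(2)[OF _ tasc_pairs] ln L_def by simp
  have tasq: "is_ascent_seq t"
  proof (rule upd_ascseq[OF asq t_def _ _ tasc_pairs])
    show "2 \<le> b" using a1 by simp
    show "b \<le> length s" using b1 L_def by simp
    have b2: "b - 2 < length s" "b - 2 \<noteq> 0" using b1 a1 ab L_def by auto
    have "w \<le> s!(b-2)" using betw[of "b-1"] a1 ab by (simp add: numeral_2_eq_2)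
    also have "s!(b-2) \<le> asc (take (b-2) s) + 1" using asq b2 unfolding is_ascent_seq_def by auto
    also have "\<dots> \<le> asc (take (b-1) s) + 1" using asc_take_mono[of "b-2" "b-1" s] by simp
    finally show "w \<le> asc (take (b-1) s) + 1" .
  qed
  show "asc s = asc (f52 s)" using ascs ft by simp
  have "set t = set s"
  proof
    have "c - 1 < length s" using c1 b1 L_def by simp
    then have "w \<in> set s" using sc nth_mem by metis
    then show "set t \<subseteq> set s" unfolding t_def using set_update_subset_insert[of s "b-1" w] by blast
    show "set s \<subseteq> set t"
    proof
      fix z assume "z \<in> set s"
      then obtain i where i: "i < length s" "s!i = z" by (auto simp: in_set_conv_nth)
      show "z \<in> set t"
      proof (cases "i = b - 1")
        case True
        then have "t!(a-1) = z" using tj[of a] a1 i sb by auto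
        moreover have "a - 1 < length t" using a1 b1 ln L_def by simp
        ultimately show ?thesis using nth_mem by metis
      next
        case False
        then have "t!i = z" using i unfolding t_def by simp
        then show ?thesis using i ln L_def by (metis nth_mem)
      qed
    qed
  qed
  then show "rep s = rep (f52 s)" unfolding rep_def using ft ln L_def by simp
  have va: "v \<le> a - 1" using ascseq_bound[OF asq, of "a-1"] a1 b1 L_def sb by auto
  have wb: "w \<le> b - 2"
  proof -
    have "w \<le> s!(b-2)" using betw[of "b-1"] a1 ab by (simp add: numeral_2_eq_2)
    also have "\<dots> \<le> b - 2" using ascseq_bound[OF asq, of "b-2"] b1 L_def by auto
    finally show ?thesis .
  qed
  have mset: "{i. 1 \<le> i \<and> i \<le> length t \<and> t ! (i - 1) = i - 1} = {i. 1 \<le> i \<and> i \<le> length s \<and> s ! (i - 1) = i - 1}"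
  proof -
    have "\<And>i. 1 \<le> i \<Longrightarrow> (t ! (i - 1) = i - 1) = (s ! (i - 1) = i - 1)"
    proof -
      fix i :: nat assume i: "1 \<le> i"
      show "(t ! (i - 1) = i - 1) = (s ! (i - 1) = i - 1)"
        using tj[OF _ i] tb sb va wb a1 by (cases "i = b") auto
    qed
    then show ?thesis using ln L_def by auto
  qed
  have mx: "maxst t = maxst s" unfolding maxst_def mset ..
  then show "maxst s = maxst (f52 s)" using ft by simp
  have s0: "s \<noteq> []" using b1 L_def by auto
  have pv: "p = 0 \<longleftrightarrow> v = 0"
    using Rmin0[OF asq s0] Rmin_mono[of 0 p s] pp unfolding v_def by (cases "p = 0") auto
  have "zero s = zero t + chi (p = 0)"
  proof (cases "v = 0")
    case True
    have "{i. i < length s \<and> s ! i = 0} = insert (b-1) {i. i < length t \<and> t ! i = 0}"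
      using True sb tb vw b1 ln L_def unfolding t_def by (auto simp: nth_list_update)
    moreover have "b - 1 \<notin> {i. i < length t \<and> t ! i = 0}" using tb vw by auto
    ultimately show ?thesis unfolding zero_def chi_def using pv True by simp
  next
    case False
    have "{i. i < length s \<and> s ! i = 0} = {i. i < length t \<and> t ! i = 0}"
      using False sb tb vw b1 ln L_def unfolding t_def by (auto simp: nth_list_update)
    then show ?thesis unfolding zero_def chi_def using pv False by simp
  qed
  then show "zero s = zero (f52 s) + chi (rpos s = 0)" using ft p_def by simp
  have ms: "\<And>i. 1 \<le> i \<and> i \<le> length s \<and> s ! (i - 1) = i - 1 \<longleftrightarrow> i \<in> {1..maxst s}"
    using maxst_set[OF asq] by blast
  have "ealm s + chi (b = maxst s + 1) = ealm t"
  proof (cases "b = maxst s + 1")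
    case True
    have hML: "maxst s \<noteq> length s" using True b1 L_def by auto
    have "s!(a-1) = a - 1" using ms[of a] True a1 by auto
    then have va2: "v = a - 1" using a1 by simp
    have "s!(a+1-1) = a+1-1" using ms[of "a+1"] True a1 ab by auto
    then have "w \<le> a" using betw[of "a+1"] a1 ab by auto
    then have "w = v + 1" using va2 vw a1 by auto
    then show ?thesis unfolding ealm_def chi_def using True hML mx ln L_def tb sb by simp
  next
    case False
    then have "maxst s \<noteq> b - 1" using b1 by auto
    then show ?thesis unfolding ealm_def chi_def using False mx ln L_def t_def by simp
  qed
  then show "ealm s + chi (Prm s (rpos s) = maxst s + 1) = ealm (f52 s)" using ft b_def p_def by simp
  show "f52 s \<in> target52 (length s)"
  proof -
    have e: "Rmin t (rpos t - 1) = v" "Rmin t (rpos t) = w" using rpt Rt by simp_all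
    have rtw': "rightmost_occ t w = c" unfolding rightmost_occ_def using rtw .
    have Rt2: "Rmin t (Suc p) = w" using Rt by simp
    have cn': "c \<noteq> b + 1" using cn unfolding b_def c_def p_def by simp
    show ?thesis unfolding ft target52_def ascseqs_def adjacent_def e rta stw rtw'
      using tasq ln rpt a1 ab c1 cn' by (auto simp: Rt Rt2 rta stw rtw')
  qed
  show "g52 (f52 s) = s"
  proof -
    have "g52 t = t[b-1 := v]" unfolding g52_def using rpt Rt stw by simp
    also have "\<dots> = s[b-1 := v]" unfolding t_def by simp
    also have "\<dots> = s" by (metis sb list_update_id)
    finally show ?thesis using ft by simp
  qed
qed

lemma two_nonrmin:
  assumes "1 \<le> i" "i \<le> length s" "1 \<le> j" "j \<le> length s" "i \<noteq> j"
    "\<not> rminP s i" "\<not> rminP s j"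
  shows "rmin s + 2 \<le> length s"
proof -
  let ?P = "\<lambda>i. \<forall>j. i < j \<and> j \<le> length s \<longrightarrow> s ! (i - 1) < s ! (j - 1)"
  let ?xs = "[1..<length s + 1]"
  have "length (filter ?P ?xs) + length (filter (\<lambda>x. \<not> ?P x) ?xs) = length ?xs"
    by (rule sum_length_filter_compl)
  moreover have sub: "{i, j} \<subseteq> set (filter (\<lambda>x. \<not> ?P x) ?xs)"
  proof -
    have "i \<in> set ?xs" "j \<in> set ?xs" using assms by (simp_all only: set_upt) auto
    then show ?thesis using assms(6,7) by (simp only: set_filter) blast
  qed
  have "card {i, j} = 2" using assms(5) by simp
  then have "2 \<le> card (set (filter (\<lambda>x. \<not> ?P x) ?xs))"
    using card_mono[OF List.finite_set sub] by linarith
  then have "2 \<le> length (filter (\<lambda>x. \<not> ?P x) ?xs)" using card_length order_trans by blast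
  ultimately show ?thesis unfolding rmin_def rmin_positions_def by (simp only: length_upt)
qed

lemma bwd:
  assumes tT: "t \<in> target52 n"
  shows "g52 t \<in> T52 \<inter> ascseqs n" "f52 (g52 t) = t"
proof -
  have tasq: "is_ascent_seq t" and ln: "length t = n" and q0: "rpos t \<noteq> 0"
    and na1: "\<not> adjacent (rightmost_occ t (Rmin t (rpos t - 1))) (second_rightmost_occ t (Rmin t (rpos t)))"
    and na2: "\<not> adjacent (second_rightmost_occ t (Rmin t (rpos t))) (rightmost_occ t (Rmin t (rpos t)))"
    using tT unfolding target52_def ascseqs_def by auto
  note rn = rpos_nz[OF q0]
  define q where "q = rpos t"
  define p where "p = q - 1"
  have qp: "q = p + 1" using q0 unfolding p_def q_def by simp
  have q1: "p + 1 < rmin t" using rn(2) qp q_def by simp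
  have pp: "p < rmin t" using q1 by simp
  define v where "v = Rmin t p"
  define x where "x = Prm t p"
  define u where "u = Rmin t (p+1)"
  define z where "z = Prm t (p+1)"
  define y where "y = second_rightmost_occ t u"
  define s where "s = t[y-1 := v]"
  have gs: "g52 t = s" unfolding g52_def s_def y_def u_def v_def using qp q_def by simp
  have x1: "1 \<le> x" "x \<le> length t" using Prm_props[OF pp] x_def by auto
  have z1: "x < z" "z \<le> length t" using Prm_mono[of p "p+1" t] q1 Prm_props[OF q1] x_def z_def by auto
  have tx: "t!(x-1) = v" unfolding v_def Rmin_def x_def ..
  have tz: "t!(z-1) = u" unfolding u_def Rmin_def z_def ..
  have vu: "v < u" unfolding v_def u_def using Rmin_mono q1 by simp
  have rx: "rightmost_occ t v = x" unfolding v_def x_def using rightmost_Prm[OF pp] .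
  have rz: "rightmost_occ t u = z" unfolding u_def z_def using rightmost_Prm[OF q1] .
  have ocz: "\<And>i. i \<in> occs t u \<Longrightarrow> i \<le> z" using rz finite_occs unfolding rightmost_occ_def by auto
  have ocx: "\<And>i. i \<in> occs t v \<Longrightarrow> i \<le> x" using rx finite_occs unfolding rightmost_occ_def by auto
  have cq: "condp t q" using rn(3) q_def by simp
  then have c2: "2 \<le> card {i \<in> occs t u. x < i}" unfolding condp_def using qp x_def u_def by simp
  obtain i0 where i0: "i0 \<in> occs t u" "x < i0" "i0 \<noteq> z"
  proof -
    have "\<not> {i \<in> occs t u. x < i} \<subseteq> {z}"
    proof
      assume "{i \<in> occs t u. x < i} \<subseteq> {z}"
      then have "card {i \<in> occs t u. x < i} \<le> 1" using card_mono[of "{z}"] by fastforce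
      then show False using c2 by simp
    qed
    then show ?thesis using that by blast
  qed
  have yM: "y = Max (occs t u - {z})" unfolding y_def second_rightmost_occ_def using rz
    unfolding rightmost_occ_def by simp
  have yin: "y \<in> occs t u - {z}" unfolding yM using i0 finite_occs by (intro Max_in) auto
  have i0y: "i0 \<le> y" unfolding yM using i0 finite_occs by (intro Max_ge) auto
  have y1: "x < y" "y < z" "t!(y-1) = u" "1 \<le> y" "y \<le> length t"
    using yin i0 i0y ocz[of y] unfolding occs_def by auto
  have e1: "rightmost_occ t (Rmin t (rpos t - 1)) = x" using rx v_def p_def q_def by simp
  have e2: "second_rightmost_occ t (Rmin t (rpos t)) = y" using y_def u_def qp q_def by simp
  have e3: "rightmost_occ t (Rmin t (rpos t)) = z" using rz u_def qp q_def by simp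
  have xy: "y \<noteq> x + 1" using na1 unfolding e1 e2 adjacent_def by simp
  have yz: "z \<noteq> y + 1" using na2 unfolding e2 e3 adjacent_def by simp
  have onlyy: "\<And>i. y < i \<Longrightarrow> i \<le> length t \<Longrightarrow> t!(i-1) = u \<Longrightarrow> i = z"
  proof (rule ccontr)
    fix i assume i: "y < i" "i \<le> length t" "t!(i-1) = u" "i \<noteq> z"
    then have "i \<in> occs t u - {z}" unfolding occs_def by auto
    then have "i \<le> y" unfolding yM using finite_occs by (intro Max_ge) auto
    then show False using i by simp
  qed
  have aftx: "\<And>j. x < j \<Longrightarrow> j \<le> length t \<Longrightarrow> u \<le> t!(j-1) \<and> v < t!(j-1)"
    using after_Prm_ge[of p t] after_Prm[OF pp] q1 unfolding u_def v_def x_def by auto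
  have ls: "length s = length t" unfolding s_def by simp
  have sj: "\<And>j. j \<noteq> y \<Longrightarrow> 1 \<le> j \<Longrightarrow> s!(j-1) = t!(j-1)" unfolding s_def using y1 by (simp add: nth_list_update)
  have sy: "s!(y-1) = v" unfolding s_def using y1 by simp
  have sx: "s!(x-1) = v" using sj[of x] x1 y1 tx by simp
  have ts: "t = s[y-1 := u]" unfolding s_def using y1 by (metis list_update_id list_update_overwrite)
  have big: "\<forall>j. x < j \<and> j \<le> length s \<and> j \<noteq> y \<longrightarrow> u \<le> s!(j-1)"
    using aftx sj ls by auto
  obtain F1 F2 where RA: "rmin_positions s = F1 @ y # F2" and RB: "rmin_positions t = F1 @ x # F2"
    using upd_rmin[OF ts x1(1) y1(1) _ sx sy vu big y1(2) _] y1 z1 tz sj[of z] ls by auto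
  note cq0 = upd_conseq[OF RA RB ts _ x1(1) y1(1)]
  have cq1: "rmin t = rmin s" "Prm s (length F1) = y" "Prm t (length F1) = x"
     "\<And>m. m \<noteq> length F1 \<Longrightarrow> Prm t m = Prm s m" "\<And>m. m < rmin s \<Longrightarrow> Rmin t m = Rmin s m"
     "length F1 < rmin s"
    using cq0 sx sy y1 ls by auto
  have lF: "length F1 = p" using Prm_inj[of "length F1" t p] cq1(6) cq1(1) pp cq1(3) x_def by simp
  have Rs: "Rmin s p = v" "Rmin s (p+1) = u" using cq1(5) cq1(1) pp q1 v_def u_def by auto
  have Ps: "Prm s p = y" "Prm s (p+1) = z" using cq1(2) cq1(4)[of "p+1"] lF z_def by auto
  have rps: "rpos s = p"
  proof (rule rpos_eqI)
    show "rmin s \<noteq> length s" using rn(1) cq1(1) ls by simp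
    show "p < rmin s" using pp cq1(1) by simp
    show "condp s p" unfolding condp_def Rs
    proof (rule card2[of _ x y])
      show "finite {i \<in> occs s v. p = 0 \<or> Prm s (p - 1) < i}" using finite_occs by simp
      have "p \<noteq> 0 \<Longrightarrow> Prm s (p - 1) < x"
      proof -
        assume "p \<noteq> 0"
        then have "Prm s (p-1) = Prm t (p-1)" using cq1(4)[of "p-1"] lF by simp
        also have "\<dots> < x" unfolding x_def using Prm_mono[of "p-1" p t] pp \<open>p \<noteq> 0\<close> by simp
        finally show ?thesis .
      qed
      then have hx: "p = 0 \<or> Prm s (p - 1) < x" by blast
      then have hy: "p = 0 \<or> Prm s (p - 1) < y" using y1 by auto
      show "x \<in> {i \<in> occs s v. p = 0 \<or> Prm s (p - 1) < i}"
        using sx x1 ls hx unfolding occs_def by auto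
      show "y \<in> {i \<in> occs s v. p = 0 \<or> Prm s (p - 1) < i}"
        using sy y1 ls hy unfolding occs_def by auto
      show "x \<noteq> y" using y1 by simp
    qed
    fix m assume m: "p < m" "m < rmin s"
    show "\<not> condp s m"
    proof (cases "m = p + 1")
      case True
      have "{i \<in> occs s (Rmin s m). m = 0 \<or> Prm s (m - 1) < i} \<subseteq> {z}"
      proof
        fix i assume "i \<in> {i \<in> occs s (Rmin s m). m = 0 \<or> Prm s (m - 1) < i}"
        then have i: "s!(i-1) = u" "y < i" "i \<le> length t" "1 \<le> i" unfolding occs_def True Rs
          using ls Ps by auto
        then have "t!(i-1) = u" using sj[of i] by auto
        then show "i \<in> {z}" using onlyy i by auto
      qed
      then have "card {i \<in> occs s (Rmin s m). m = 0 \<or> Prm s (m - 1) < i} \<le> 1"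
        using card_mono[of "{z}"] by fastforce
      then show ?thesis unfolding condp_def by simp
    next
      case False
      then have m2: "p + 1 < m" using m by simp
      have Pm: "Prm s (m-1) = Prm t (m-1)" using cq1(4)[of "m-1"] lF m2 by simp
      have Pz: "z \<le> Prm t (m-1)"
      proof (cases "p + 1 = m - 1")
        case True then show ?thesis unfolding z_def by simp
      next
        case False
        then have "p + 1 < m - 1" "m - 1 < rmin t" using m2 m cq1(1) by auto
        then show ?thesis unfolding z_def using Prm_mono[of "p+1" "m-1" t] by simp
      qed
      have "{i \<in> occs s (Rmin s m). m = 0 \<or> Prm s (m - 1) < i} = {i \<in> occs t (Rmin t m). m = 0 \<or> Prm t (m - 1) < i}"
        using cq1(5)[of m] m Pm Pz y1 sj ls unfolding occs_def by auto
      moreover have "\<not> condp t m" using rpos_ge[OF rn(1), of m] m2 m cq1(1) q_def qp by auto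
      ultimately show ?thesis unfolding condp_def by simp
    qed
  qed
  have pairs: "\<forall>k. k + 1 < length s \<longrightarrow> (t!k < t!(k+1) \<longleftrightarrow> s!k < s!(k+1))"
  proof (rule upd_asc_pairs[OF ts _ _ sy vu])
    show "2 \<le> y" using x1 y1 by simp
    show "y \<le> length s" using y1 ls by simp
    have "u \<le> t!(y-1-1)" using aftx[of "y-1"] x1 y1 xy by auto
    then show "u \<le> s!(y-2)" using sj[of "y-1"] x1 y1 xy by (simp add: numeral_2_eq_2)
    assume "y < length s"
    then have "u \<le> t!(y+1-1)" "t!(y+1-1) \<noteq> u" using aftx[of "y+1"] onlyy[of "y+1"] y1 yz ls by auto
    then show "u < s!y" using sj[of "y+1"] by simp
  qed
  have sasq: "is_ascent_seq s"
  proof (rule upd_ascseq[OF tasq s_def])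
    show "2 \<le> y" using x1 y1 by simp
    show "y \<le> length t" using y1 by simp
    show "\<forall>k. k + 1 < length t \<longrightarrow> (s!k < s!(k+1) \<longleftrightarrow> t!k < t!(k+1))" using pairs ls by simp
    have "y - 1 < length t" "y - 1 \<noteq> 0" using x1 y1 by auto
    then have "t!(y-1) \<le> asc (take (y-1) t) + 1" using tasq unfolding is_ascent_seq_def by auto
    then show "v \<le> asc (take (y-1) t) + 1" using y1 vu by simp
  qed
  have nid: "s \<noteq> [0..<length s]"
  proof
    assume h: "s = [0..<length s]"
    have "s!(x-1) = x - 1" "s!(y-1) = y - 1" using x1 y1 ls by (subst h, simp)+
    then show False using sx sy x1 y1 by simp
  qed
  have nr1: "\<not> rminP s x" using sx sy x1 y1 ls by (metis less_irrefl)
  have nr2: "\<not> rminP s (x+1)"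
  proof
    assume "rminP s (x+1)"
    then have "s!(x+1-1) < s!(z-1)" using y1 z1 xy ls by (metis le_less_trans less_Suc_eq_le not_less_eq Suc_eq_plus1 order_less_le)
    moreover have "s!(z-1) = u" using sj[of z] tz y1 by auto
    moreover have "u \<le> s!(x+1-1)" using aftx[of "x+1"] sj[of "x+1"] y1 xy x1 by auto
    ultimately show False by simp
  qed
  have lr: "length s \<noteq> rmin s + 1"
    using two_nonrmin[OF _ _ _ _ _ nr1 nr2] x1 y1 xy ls by auto
  have occsv: "occs s v = insert y (occs t v)" unfolding s_def using occs_upd_same[of y t v] y1 by simp
  have ynt: "y \<notin> occs t v" using y1 vu unfolding occs_def by auto
  have xo: "x \<in> occs t v" using x1 tx unfolding occs_def by auto
  have Mv: "Max (occs s v) = y" unfolding occsv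
  proof (rule Max_eqI')
    show "finite (insert y (occs t v))" using finite_occs by simp
    show "y \<in> insert y (occs t v)" by simp
    fix i assume "i \<in> insert y (occs t v)"
    then show "i \<le> y" using ocx[of i] y1 by (cases "i = y") auto
  qed
  have sv: "second_rightmost_occ s v = x" unfolding second_rightmost_occ_def Mv unfolding occsv
    using ynt rx unfolding rightmost_occ_def by simp
  have cv: "\<not> card (occs s v) < 2" using card2[of "occs s v" x y] finite_occs occsv xo y1 by auto
  have sebr_eq: "sebr s = Min {s ! (i - 1) | i. x < i \<and> i < y}"
    unfolding sebr_def Let_def rps Rs sv rightmost_occ_def Mv using cv xy by simp
  have finB: "finite {s ! (i - 1) | i. x < i \<and> i < y}" by (rule finite_image_set) simp
  have neB: "{s ! (i - 1) | i. x < i \<and> i < y} \<noteq> {}" using xy y1 by (metis (mono_tags, lifting) empty_iff le_add1 le_neq_implies_less less_add_one mem_Collect_eq Suc_eq_plus1 Suc_le_eq)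
  have "\<forall>e \<in> {s ! (i - 1) | i. x < i \<and> i < y}. u \<le> e"
  proof
    fix e assume "e \<in> {s ! (i - 1) | i. x < i \<and> i < y}"
    then obtain i where i: "x < i" "i < y" "e = s!(i-1)" by blast
    then show "u \<le> e" using aftx[of i] sj[of i] y1 by auto
  qed
  then have ub: "u \<le> sebr s" unfolding sebr_eq using finB neB Min_ge_iff by blast
  have sT: "s \<in> T52"
    unfolding T52_def ascseqs_star_def using sasq nid lr ub vu rps Rs Ps yz cq1(1) q1 by auto
  show "g52 t \<in> T52 \<inter> ascseqs n" using sT sasq ls ln gs unfolding ascseqs_def by simp
  have "f52 s = s[y-1 := u]" unfolding f52_def rps Ps Rs ..
  then show "f52 (g52 t) = t" using gs ts by simp
qed

theorem mainTheorem14: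
  fixes n :: nat
  shows "\<exists>f. bij_betw f (T52 \<inter> ascseqs n) (target52 n) \<and>
    (\<forall>s \<in> T52 \<inter> ascseqs n.
       asc s = asc (f s) \<and> rep s = rep (f s) \<and> maxst s = maxst (f s) \<and> rmin s = rmin (f s) \<and>
       rpos s + 1 = rpos (f s) \<and>
       zero s = zero (f s) + chi (rpos s = 0) \<and>
       ealm s + chi (Prm s (rpos s) = maxst s + 1) = ealm (f s))"
proof (intro exI conjI)
  show "bij_betw f52 (T52 \<inter> ascseqs n) (target52 n)"
  proof (rule bij_betw_byWitness[where f'=g52])
    show "\<forall>a\<in>T52 \<inter> ascseqs n. g52 (f52 a) = a" using fwd(2) by blast
    show "\<forall>a'\<in>target52 n. f52 (g52 a') = a'" using bwd(2) by blast
    show "f52 ` (T52 \<inter> ascseqs n) \<subseteq> target52 n" using fwd(1) unfolding ascseqs_def by fastforce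
    show "g52 ` target52 n \<subseteq> T52 \<inter> ascseqs n" using bwd(1) by blast
  qed
  show "\<forall>s \<in> T52 \<inter> ascseqs n.
       asc s = asc (f52 s) \<and> rep s = rep (f52 s) \<and> maxst s = maxst (f52 s) \<and> rmin s = rmin (f52 s) \<and>
       rpos s + 1 = rpos (f52 s) \<and>
       zero s = zero (f52 s) + chi (rpos s = 0) \<and>
       ealm s + chi (Prm s (rpos s) = maxst s + 1) = ealm (f52 s)"
    using fwd(3-9) by blast
qed
end
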